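(* Let $k$ be a fixed complex number. For every integer $n>0$, $$(\Lambda_A\ast\beta_k)(n)=A(n)\beta_k(n)-\beta_{k+1}(n).$$
   Context: $A(n)=\sum_{p^\alpha\parallel n}\alpha p$ is the sum of the prime factors of $n$ counted with multiplicity. $\Lambda_A(n)=p$ if $n=p^k$ for some prime $p$ and integer $k\geq1$, and $0$ otherwise. $\beta_k(n)=\sum_{p\mid n}p^k$ (sum over distinct primes dividing $n$). $\ast$ is Dirichlet convolution $(F\ast G)(n)=\sum_{d\mid n}F(d)G(n/d)$. *)

theory Defs
  imports "HOL-Analysis.Analysis" "HOL-Computational_Algebra.Primes"
begin

definition A_fun :: "nat \<Rightarrow> nat" where
  "A_fun n = (\<Sum>p\<in>prime_factors n. multiplicity p n * p)"

definition Lambda_A :: "nat \<Rightarrow> nat" where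
  "Lambda_A n = (if \<exists>p k. prime p \<and> k \<ge> 1 \<and> n = p ^ k
                 then (THE p. prime p \<and> (\<exists>k\<ge>1. n = p ^ k)) else 0)"

definition beta :: "complex \<Rightarrow> nat \<Rightarrow> complex" where
  "beta k n = (\<Sum>p\<in>prime_factors n. of_nat p powr k)"

definition dconv :: "(nat \<Rightarrow> complex) \<Rightarrow> (nat \<Rightarrow> complex) \<Rightarrow> nat \<Rightarrow> complex" where
  "dconv F G n = (\<Sum>d | d dvd n. F d * G (n div d))"

end

theory Submission
  imports Defs
begin

lemma Lambda_A_pp:
  assumes "prime p" "j \<ge> 1"
  shows "Lambda_A (p ^ j) = p"
proof -
  have "(THE q. prime q \<and> (\<exists>i\<ge>1. p ^ j = q ^ i)) = p"
  proof (rule the_equality)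
    show "prime p \<and> (\<exists>i\<ge>1. p ^ j = p ^ i)" using assms by blast
  next
    fix q assume "prime q \<and> (\<exists>i\<ge>1. p ^ j = q ^ i)"
    then obtain i where "prime q" "i \<ge> 1" "p ^ j = q ^ i" by blast
    then show "q = p" using assms prime_power_inj'(1)[of p q j i] by simp
  qed
  then show ?thesis using assms unfolding Lambda_A_def by auto
qed

lemma Lambda_A_not:
  assumes "\<not> (\<exists>p k. prime p \<and> k \<ge> 1 \<and> d = p ^ k)"
  shows "Lambda_A d = 0"
  using assms unfolding Lambda_A_def by auto

lemma pf_div:
  fixes n p j :: nat
  assumes "n > 0" "prime p" "j \<ge> 1" "j \<le> multiplicity p n"
  shows "prime_factors (n div p ^ j) =
           (if j = multiplicity p n then prime_factors n - {p} else prime_factors n)"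
proof -
  have pj: "p ^ j dvd n" using assms prime_gt_1_nat[OF assms(2)] power_dvd_iff_le_multiplicity[of n p j] by auto
  define r where "r = n div p ^ j"
  have nr: "n = p ^ j * r" using pj r_def by simp
  have r0: "r > 0" using nr assms by (cases "r = 0") auto
  have q: "q dvd r \<longleftrightarrow> q dvd n" if "prime q" "q \<noteq> p" for q
  proof
    assume "q dvd r" then show "q dvd n" using nr by simp
  next
    assume "q dvd n"
    moreover have "coprime q (p ^ j)"
      using that assms(2) by (simp add: primes_coprime)
    ultimately show "q dvd r" using nr coprime_dvd_mult_right_iff by metis
  qed
  have pp: "p dvd r \<longleftrightarrow> j < multiplicity p n"
  proof -
    have "p dvd r \<longleftrightarrow> p ^ j * p dvd p ^ j * r"
      using assms(2) by (simp add: prime_gt_0_nat)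
    also have "\<dots> \<longleftrightarrow> p ^ Suc j dvd n" using nr by (simp add: mult.commute)
    also have "\<dots> \<longleftrightarrow> Suc j \<le> multiplicity p n"
      using assms prime_gt_1_nat[OF assms(2)] power_dvd_iff_le_multiplicity[of n p "Suc j"] by auto
    finally show ?thesis by linarith
  qed
  show ?thesis
    unfolding r_def[symmetric]
  proof (rule set_eqI)
    fix q
    show "q \<in> prime_factors r \<longleftrightarrow>
      q \<in> (if j = multiplicity p n then prime_factors n - {p} else prime_factors n)"
    proof (cases "q = p")
      case True
      then show ?thesis using pp assms r0 nr by (auto simp: in_prime_factors_iff)
    next
      case False
      then show ?thesis using q[of q] assms r0 by (auto simp: in_prime_factors_iff)
    qed
  qed
qed

lemma beta_div:
  fixes n p j :: nat
  assumes "n > 0" "prime p" "j \<ge> 1" "j \<le> multiplicity p n"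
  shows "beta k (n div p ^ j) =
           beta k n - (if j = multiplicity p n then of_nat p powr k else 0)"
proof -
  have "p \<in> prime_factors n"
  proof -
    have "p ^ j dvd n" using assms prime_gt_1_nat[OF assms(2)] power_dvd_iff_le_multiplicity[of n p j] by auto
    moreover have "p dvd p ^ j" using assms(3) by (simp add: dvd_power)
    ultimately have "p dvd n" by (rule dvd_trans[rotated])
    then show ?thesis using assms by (simp add: in_prime_factors_iff)
  qed
  then show ?thesis
    unfolding beta_def pf_div[OF assms]
    by (simp add: sum_diff1)
qed

lemma inner:
  fixes n p :: nat
  assumes "n > 0" "prime p" "p \<in> prime_factors n"
  shows "(\<Sum>j=1..multiplicity p n. of_nat p * beta k (n div p ^ j))
     = of_nat (multiplicity p n * p) * beta k n - of_nat p powr (k + 1)"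
proof -
  define m where "m = multiplicity p n"
  have m1: "m \<ge> 1" using assms unfolding m_def
    by (simp add: prime_factors_multiplicity Suc_le_eq)
  have "(\<Sum>j=1..m. of_nat p * beta k (n div p ^ j))
      = (\<Sum>j=1..m. of_nat p * beta k n - (if j = m then of_nat p * of_nat p powr k else 0))"
    by (rule sum.cong) (auto simp: beta_div[OF assms(1,2)] m_def right_diff_distrib)
  also have "\<dots> = of_nat m * (of_nat p * beta k n) - of_nat p * of_nat p powr k"
    using m1 by (simp add: sum_subtractf)
  also have "of_nat p * of_nat p powr k = (of_nat p powr (k + 1) :: complex)"
    using assms(2) by (simp add: powr_add prime_gt_0_nat)
  finally show ?thesis unfolding m_def by (simp add: algebra_simps)
qed

theorem theorem3p4:
  fixes k :: complex and n :: nat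
  assumes "n > 0"
  shows "dconv (\<lambda>d. of_nat (Lambda_A d)) (beta k) n
           = of_nat (A_fun n) * beta k n - beta (k + 1) n"
proof -
  define S where "S = (SIGMA p:prime_factors n. {1..multiplicity p n})"
  define g where "g = (\<lambda>(p, j). (p::nat) ^ j)"
  have fin: "finite {d. d dvd n}" using assms by simp
  have pd: "p ^ j dvd n" if "prime p" "j \<le> multiplicity p n" for p j
    using assms that prime_gt_1_nat[of p] power_dvd_iff_le_multiplicity[of n p j] by auto
  have sub: "g ` S \<subseteq> {d. d dvd n}"
    unfolding S_def g_def
    using pd by (auto simp: in_prime_factors_iff)
  have zero: "of_nat (Lambda_A d) * beta k (n div d) = 0" if "d \<in> {d. d dvd n} - g ` S" for d
  proof -
    have "\<not> (\<exists>p k. prime p \<and> k \<ge> 1 \<and> d = p ^ k)"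
    proof
      assume "\<exists>p k. prime p \<and> k \<ge> 1 \<and> d = p ^ k"
      then obtain p j where pj: "prime p" "j \<ge> 1" "d = p ^ j" by blast
      have "d dvd n" using that by auto
      then have "j \<le> multiplicity p n" "p \<in> prime_factors n"
        using pj assms prime_gt_1_nat[of p] power_dvd_iff_le_multiplicity[of n p j]
        by (auto simp: in_prime_factors_iff dvd_power[of j p] intro: dvd_trans)
      then have "d \<in> g ` S" unfolding S_def g_def using pj by force
      then show False using that by blast
    qed
    then show ?thesis by (simp add: Lambda_A_not)
  qed
  have inj: "inj_on g S"
    unfolding S_def g_def inj_on_def
    by (auto simp: in_prime_factors_iff prime_power_inj'')
  have "dconv (\<lambda>d. of_nat (Lambda_A d)) (beta k) n
      = (\<Sum>d\<in>g ` S. of_nat (Lambda_A d) * beta k (n div d))"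
    unfolding dconv_def
    by (rule sum.mono_neutral_right[OF fin sub]) (use zero in blast)
  also have "\<dots> = (\<Sum>x\<in>S. of_nat (Lambda_A (g x)) * beta k (n div g x))"
    by (simp add: sum.reindex[OF inj])
  also have "\<dots> = (\<Sum>x\<in>S. (\<lambda>(p, j). of_nat p * beta k (n div p ^ j)) x)"
    by (rule sum.cong) (auto simp: S_def g_def Lambda_A_pp in_prime_factors_iff)
  also have "\<dots> = (\<Sum>p\<in>prime_factors n. \<Sum>j=1..multiplicity p n.
                     of_nat p * beta k (n div p ^ j))"
    unfolding S_def by (rule sum.Sigma[symmetric]) auto
  also have "\<dots> = (\<Sum>p\<in>prime_factors n.
       of_nat (multiplicity p n * p) * beta k n - of_nat p powr (k + 1))"
  proof (rule sum.cong[OF refl])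
    fix p assume hp: "p \<in> prime_factors n"
    then have "prime p" by (simp add: in_prime_factors_iff)
    show "(\<Sum>j=1..multiplicity p n. of_nat p * beta k (n div p ^ j))
      = of_nat (multiplicity p n * p) * beta k n - of_nat p powr (k + 1)"
      by (rule inner[OF assms \<open>prime p\<close> hp])
  qed
  also have "\<dots> = of_nat (A_fun n) * beta k n - beta (k + 1) n"
    unfolding A_fun_def beta_def
    by (simp add: sum_subtractf sum_distrib_right)
  finally show ?thesis .
qed

end
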